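(* Let $\mathcal{T}$ be a nilpotent Lie triple system of dimension $3$ over a field $\mathbb{F}$ of characteristic different from $2$. Then $\mathcal{T}$ is isomorphic to exactly one of: $\mathcal{T}_{3,1}$, the abelian Lie triple system (all products zero); or $\mathcal{T}_{3,2}$, with basis $e_1,e_2,e_3$ and nonzero products $[e_1,e_2,e_1]=e_3$, $[e_2,e_1,e_1]=-e_3$. *)

theory Defs
  imports Main "HOL.Vector_Spaces" "HOL-Library.Product_Plus"
begin

definition lie_triple_system ::
  "('a::field \<Rightarrow> 'v::ab_group_add \<Rightarrow> 'v) \<Rightarrow> ('v \<Rightarrow> 'v \<Rightarrow> 'v \<Rightarrow> 'v) \<Rightarrow> bool" where
  "lie_triple_system s t \<longleftrightarrow>
     vector_space s \<and>
     (\<forall>y z. Vector_Spaces.linear s s (\<lambda>x. t x y z)) \<and>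
     (\<forall>x z. Vector_Spaces.linear s s (\<lambda>y. t x y z)) \<and>
     (\<forall>x y. Vector_Spaces.linear s s (\<lambda>z. t x y z)) \<and>
     (\<forall>x y. t x x y = 0) \<and>
     (\<forall>x y z. t x y z + t y z x + t z x y = 0) \<and>
     (\<forall>u v x y z. t u v (t x y z) = t (t u v x) y z + t x (t u v y) z + t x y (t u v z))"

text \<open>Lower central series: T^1 = T, T^(n+1) = [T^n, T, T] (indexed from 0 here).\<close>

fun lts_lcs ::
  "('a::field \<Rightarrow> 'v::ab_group_add \<Rightarrow> 'v) \<Rightarrow> ('v \<Rightarrow> 'v \<Rightarrow> 'v \<Rightarrow> 'v) \<Rightarrow> nat \<Rightarrow> 'v set" where
  "lts_lcs s t 0 = UNIV"
| "lts_lcs s t (Suc n) = module.span s {t a b c | a b c. a \<in> lts_lcs s t n}"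

definition lts_nilpotent ::
  "('a::field \<Rightarrow> 'v::ab_group_add \<Rightarrow> 'v) \<Rightarrow> ('v \<Rightarrow> 'v \<Rightarrow> 'v \<Rightarrow> 'v) \<Rightarrow> bool" where
  "lts_nilpotent s t \<longleftrightarrow> (\<exists>n. lts_lcs s t n = {0})"

definition lts_isomorphic ::
  "('a::field \<Rightarrow> 'v::ab_group_add \<Rightarrow> 'v) \<Rightarrow> ('v \<Rightarrow> 'v \<Rightarrow> 'v \<Rightarrow> 'v) \<Rightarrow>
   ('a \<Rightarrow> 'w::ab_group_add \<Rightarrow> 'w) \<Rightarrow> ('w \<Rightarrow> 'w \<Rightarrow> 'w \<Rightarrow> 'w) \<Rightarrow> bool" where
  "lts_isomorphic s1 t1 s2 t2 \<longleftrightarrow>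
     (\<exists>f. Vector_Spaces.linear s1 s2 f \<and> bij f \<and>
          (\<forall>x y z. f (t1 x y z) = t2 (f x) (f y) (f z)))"

text \<open>The model space F^3 with basis e1=(1,0,0), e2=(0,1,0), e3=(0,0,1).\<close>

definition scale3 :: "'a::field \<Rightarrow> 'a \<times> 'a \<times> 'a \<Rightarrow> 'a \<times> 'a \<times> 'a" where
  "scale3 c v = (case v of (x1, x2, x3) \<Rightarrow> (c * x1, c * x2, c * x3))"

definition T31 :: "'a::field \<times> 'a \<times> 'a \<Rightarrow> 'a \<times> 'a \<times> 'a \<Rightarrow> 'a \<times> 'a \<times> 'a \<Rightarrow> 'a \<times> 'a \<times> 'a" where
  "T31 x y z = 0"

text \<open>T_{3,2}: trilinear extension of [e1,e2,e1] = e3, [e2,e1,e1] = -e3, other basis products zero.\<close>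
definition T32 :: "'a::field \<times> 'a \<times> 'a \<Rightarrow> 'a \<times> 'a \<times> 'a \<Rightarrow> 'a \<times> 'a \<times> 'a \<Rightarrow> 'a \<times> 'a \<times> 'a" where
  "T32 x y z = (case x of (x1, x2, x3) \<Rightarrow> case y of (y1, y2, y3) \<Rightarrow> case z of (z1, z2, z3) \<Rightarrow>
       (0, 0, z1 * (x1 * y2 - x2 * y1)))"

end

theory Submission
  imports Defs
begin
lemma vs_scale3: "vector_space (scale3 :: 'a::field \<Rightarrow> _)"
  by unfold_locales (auto simp: scale3_def plus_prod_def algebra_simps split: prod.splits)

lemma iso_from_inv:
  fixes s1 :: "'a::field \<Rightarrow> 'v::ab_group_add \<Rightarrow> 'v" and s2 :: "'a \<Rightarrow> 'w::ab_group_add \<Rightarrow> 'w"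
  assumes "vector_space s1" "vector_space s2" "bij h"
    and hadd: "\<And>p q. h (p+q) = h p + h q" and hsc: "\<And>k p. h (s2 k p) = s1 k (h p)"
    and ht: "\<And>u v r. t1 (h u) (h v) (h r) = h (t2 u v r)"
  shows "lts_isomorphic s1 t1 s2 t2"
proof -
  have inj: "inj h" and sj: "surj h" using assms(3) bij_is_inj bij_is_surj by auto
  define f where "f = inv h"
  have hf: "h (f x) = x" for x unfolding f_def using sj by (simp add: surj_f_inv_f)
  have fh: "f (h x) = x" for x unfolding f_def using inj by (simp add: inv_f_f)
  have "f (x + y) = f x + f y" for x y
    by (metis hf fh hadd)
  moreover have "f (s1 k x) = s2 k (f x)" for k x
    by (metis hf fh hsc)
  moreover have "f (t1 x y z) = t2 (f x) (f y) (f z)" for x y z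
    by (metis hf fh ht)
  moreover have "bij f" unfolding f_def using assms(3) by (simp add: bij_imp_bij_inv)
  ultimately show ?thesis unfolding lts_isomorphic_def linear_iff using assms(1,2) by blast
qed


locale lts3 = vector_space s for s :: "'a::field \<Rightarrow> 'v::ab_group_add \<Rightarrow> 'v" +
  fixes t :: "'v \<Rightarrow> 'v \<Rightarrow> 'v \<Rightarrow> 'v"
  assumes lin1: "Vector_Spaces.linear s s (\<lambda>x. t x y z)"
    and lin2: "Vector_Spaces.linear s s (\<lambda>y. t x y z)"
    and lin3: "Vector_Spaces.linear s s (\<lambda>z. t x y z)"
    and alt: "t x x y = 0"
    and jac: "t x y z + t y z x + t z x y = 0"
begin

lemma t_add1[simp]: "t (a+b) c d = t a c d + t b c d" using lin1[of c d] by (simp add: linear_iff)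
lemma t_add2[simp]: "t c (a+b) d = t c a d + t c b d" using lin2[of c d] by (simp add: linear_iff)
lemma t_add3[simp]: "t c d (a+b) = t c d a + t c d b" using lin3[of c d] by (simp add: linear_iff)
lemma t_sc1[simp]: "t (s k a) c d = s k (t a c d)" using lin1[of c d] by (simp add: linear_iff)
lemma t_sc2[simp]: "t c (s k a) d = s k (t c a d)" using lin2[of c d] by (simp add: linear_iff)
lemma t_sc3[simp]: "t c d (s k a) = s k (t c d a)" using lin3[of c d] by (simp add: linear_iff)
lemma t_01[simp]: "t 0 c d = 0" using t_sc1[of 0 c] by simp
lemma t_02[simp]: "t c 0 d = 0" using t_sc2[of c 0] by simp
lemma t_03[simp]: "t c d 0 = 0" using t_sc3[of c d 0 0] by simp
lemma t_neg1[simp]: "t (-a) c d = - t a c d" using t_sc1[of "-1" a] by simp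
lemma t_neg2[simp]: "t c (-a) d = - t c a d" using t_sc2[of c "-1" a] by simp
lemma t_neg3[simp]: "t c d (-a) = - t c d a" using t_sc3[of c d "-1" a] by simp
lemma t_diff1[simp]: "t (a-b) c d = t a c d - t b c d" by (simp add: diff_conv_add_uminus del: add_uminus_conv_diff)
lemma t_diff2[simp]: "t c (a-b) d = t c a d - t c b d" by (simp add: diff_conv_add_uminus del: add_uminus_conv_diff)
lemma t_diff3[simp]: "t c d (a-b) = t c d a - t c d b" by (simp add: diff_conv_add_uminus del: add_uminus_conv_diff)
lemma skew: "t b a c = - t a b c"
proof -
  have "0 = t (a+b) (a+b) c" by (rule alt[symmetric])
  also have "\<dots> = t a a c + t b a c + (t a b c + t b b c)" by (simp only: t_add1 t_add2)
  also have "\<dots> = t a b c + t b a c" by (simp add: alt)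
  finally have "t a b c + t b a c = 0" by (rule sym)
  then show ?thesis by (metis add.commute eq_neg_iff_add_eq_0)
qed

abbreviation "L n \<equiv> lts_lcs s t n"

lemma L_Suc: "L (Suc n) = span {t a b c |a b c. a \<in> L n}" by (simp only: lts_lcs.simps)

lemma L_suc_sub: "L (Suc n) \<subseteq> L n"
proof (induction n)
  case 0 then show ?case by simp
next
  case (Suc n)
  have "{t a b c |a b c. a \<in> L (Suc n)} \<subseteq> {t a b c|a b c. a \<in> L n}" using Suc by blast
  then have "span {t a b c |a b c. a \<in> L (Suc n)} \<subseteq> span {t a b c|a b c. a \<in> L n}" by (rule span_mono)
  then show ?case by (metis L_Suc)
qed

lemma L_stable: assumes "L (Suc 0) = L (Suc (Suc 0))" shows "L (Suc n) = L (Suc 0)"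
proof (induction n)
  case 0 then show ?case by simp
next
  case (Suc n)
  have "L (Suc (Suc n)) = span {t a b c |a b c. a \<in> L (Suc n)}" by (rule L_Suc)
  also have "\<dots> = span {t a b c |a b c. a \<in> L (Suc 0)}" by (simp only: Suc)
  also have "\<dots> = L (Suc (Suc 0))" by (rule L_Suc[symmetric])
  finally show ?case using assms by (simp only:)
qed

lemma ideal1: "a \<in> L (Suc 0) \<Longrightarrow> t a b c \<in> L (Suc (Suc 0))"
  unfolding L_Suc[of "Suc 0"] by (rule span_base) blast
lemma ideal2: "b \<in> L (Suc 0) \<Longrightarrow> t a b c \<in> L (Suc (Suc 0))"
proof -
  assume "b \<in> L (Suc 0)"
  then have "- t b a c \<in> L (Suc (Suc 0))" using ideal1[of b a c] unfolding L_Suc[of "Suc 0"] by (simp add: span_neg)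
  then show ?thesis by (simp add: skew[of b a c])
qed
lemma ideal3: assumes "c \<in> L (Suc 0)" shows "t a b c \<in> L (Suc (Suc 0))"
proof -
  have "t a b c = - t b c a - t c a b" using jac[of a b c] by (simp add: eq_neg_iff_add_eq_0 algebra_simps)
  also have "\<dots> = t c b a - t c a b" using skew[of b c a] by simp
  finally show ?thesis using ideal1[OF assms, of b a] ideal1[OF assms, of a b]
    unfolding L_Suc[of "Suc 0"] by (simp add: span_diff)
qed


abbreviation "W \<equiv> L (Suc 0)"
abbreviation "W2 \<equiv> L (Suc (Suc 0))"

lemma prod_in_W: "t a b c \<in> W"
  unfolding L_Suc[of 0] by (rule span_base) auto

lemma subspace_L: "subspace (L (Suc n))"
  unfolding L_Suc by simp

lemma collapse: assumes nil: "lts_nilpotent s t" and sub: "W \<subseteq> W2" shows "t a b c = 0"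
proof -
  have eq: "W = W2" using sub L_suc_sub[of "Suc 0"] by blast
  obtain n where n: "L n = {0}" using nil unfolding lts_nilpotent_def by blast
  have "W \<subseteq> {0}"
  proof (cases n)
    case 0 then show ?thesis using n L_suc_sub[of 0] by simp
  next
    case (Suc m) then show ?thesis using n L_stable[OF eq, of m] by simp
  qed
  then show ?thesis using prod_in_W[of a b c] by blast
qed

lemma span3: assumes dim3: "dim (UNIV :: 'v set) = 3" and ind: "independent S" and c: "card S = 3"
  shows "span S = UNIV"
proof -
  obtain B where B: "independent B" "UNIV \<subseteq> span B" "card B = dim (UNIV :: 'v set)"
    using basis_exists[of UNIV] by blast
  have fin: "finite B" using B(3) dim3 by (intro card_ge_0_finite) simp
  interpret fd: finite_dimensional_vector_space s B
    by unfold_locales (use B fin in auto)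
  have fS: "finite S" using c by (intro card_ge_0_finite) simp
  have "UNIV \<subseteq> span S" using fd.card_eq_dim[of S UNIV] ind c dim3 fS by simp
  then show ?thesis by blast
qed

lemma comb_zero: assumes "z \<noteq> 0" "y \<notin> span {z}" "x \<notin> span {y, z}"
  and eq: "s a x + s b y + s c z = 0" shows "a = 0 \<and> b = 0 \<and> c = 0"
proof -
  have a: "a = 0"
  proof (rule ccontr)
    assume a: "a \<noteq> 0"
    have "s a x = - (s b y + s c z)" using eq by (metis add.assoc eq_neg_iff_add_eq_0)
    then have "x = s (inverse a) (- (s b y + s c z))" using a by (metis scale_scale scale_one left_inverse)
    moreover have "s (inverse a) (- (s b y + s c z)) \<in> span {y, z}"
      by (intro span_scale span_neg span_add) (auto intro: span_base)
    ultimately show False using assms(3) by simp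
  qed
  have b: "b = 0"
  proof (rule ccontr)
    assume b: "b \<noteq> 0"
    have "s b y = - (s c z)" using eq a by (simp add: eq_neg_iff_add_eq_0)
    then have "y = s (inverse b) (- (s c z))" using b by (metis scale_scale scale_one left_inverse)
    moreover have "s (inverse b) (- (s c z)) \<in> span {z}"
      by (intro span_scale span_neg) (auto intro: span_base)
    ultimately show False using assms(2) by simp
  qed
  have "s c z = 0" using eq a b by simp
  then show ?thesis using a b assms(1) by simp
qed

definition comb :: "'v \<Rightarrow> 'v \<Rightarrow> 'v \<Rightarrow> 'a \<times> 'a \<times> 'a \<Rightarrow> 'v" where
  "comb x y z p = (case p of (a, b, c) \<Rightarrow> s a x + s b y + s c z)"

lemma comb_simp[simp]: "comb x y z (a, b, c) = s a x + s b y + s c z" by (simp add: comb_def)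

lemma comb_add: "comb x y z (p + q) = comb x y z p + comb x y z q"
  by (cases p; cases q) (simp add: plus_prod_def algebra_simps)
lemma comb_sc: "comb x y z (scale3 k p) = s k (comb x y z p)"
  by (cases p) (simp add: scale3_def algebra_simps)

lemma comb_bij: assumes "z \<noteq> 0" "y \<notin> span {z}" "x \<notin> span {y, z}" "span {x, y, z} = UNIV"
  shows "bij (comb x y z)"
proof (rule bijI)
  show "inj (comb x y z)"
  proof (rule injI)
    fix p q assume e: "comb x y z p = comb x y z q"
    obtain a1 b1 c1 where p: "p = (a1, b1, c1)" by (cases p) auto
    obtain a2 b2 c2 where q: "q = (a2, b2, c2)" by (cases q) auto
    have "s (a1 - a2) x + s (b1 - b2) y + s (c1 - c2) z = 0"
      using e unfolding p q by (simp add: algebra_simps)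
    from comb_zero[OF assms(1-3) this] show "p = q" unfolding p q by simp
  qed
  show "surj (comb x y z)"
  proof -
   have "v \<in> range (comb x y z)" for v
   proof -
    have "v \<in> span (insert x {y, z})" using assms(4) by simp
    then obtain k1 where k1: "v - s k1 x \<in> span (insert y {z})" using span_breakdown_eq by blast
    then obtain k2 where k2: "v - s k1 x - s k2 y \<in> span {z}" using span_breakdown_eq by blast
    then obtain k3 where k3: "v - s k1 x - s k2 y = s k3 z" using span_singleton by blast
    then have "comb x y z (k1, k2, k3) = v" by (simp add: algebra_simps)
    then show ?thesis by (metis rangeI)
   qed
   then show ?thesis by blast
  qed
qed

lemma W_line: assumes dim3: "dim (UNIV :: 'v set) = 3" and nz: "w \<noteq> 0" "w \<in> W"
  and notsub: "\<not> W \<subseteq> W2" and u: "u \<in> W" shows "u \<in> span {w}"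
proof (rule ccontr)
  assume uw: "u \<notin> span {w}"
  have ind: "independent {u, w}" using uw nz(1) by (intro independent_insertI) (auto simp: independent_empty)
  have une: "u \<noteq> w" using uw span_base by blast
  have "span {u, w} \<noteq> UNIV"
  proof
    assume "span {u, w} = UNIV"
    then have "dim (UNIV :: 'v set) = dim {u, w}" by (metis dim_span)
    also have "\<dots> = 2" using dim_eq_card_independent[OF ind] une by simp
    finally show False using dim3 by simp
  qed
  then obtain x where x: "x \<notin> span {u, w}" by blast
  have ind3: "independent {x, u, w}" using x ind by (rule independent_insertI)
  have "x \<notin> {u, w}" using x span_base by blast
  then have "card {x, u, w} = 3" using une by auto
  then have sp: "span {x, u, w} = UNIV" using span3[OF dim3 ind3] by simp
  have uwW: "span {u, w} \<subseteq> W" using u nz(2) by (intro span_minimal subspace_L) auto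
  have dec: "\<exists>k w1. a = s k x + w1 \<and> w1 \<in> W" for a
  proof -
    have "a \<in> span (insert x {u, w})" using sp by simp
    then obtain k where "a - s k x \<in> span {u, w}" using span_breakdown_eq by blast
    then show ?thesis using uwW by (intro exI[of _ k] exI[of _ "a - s k x"]) auto
  qed
  have "t a b c \<in> W2" for a b c
  proof -
    obtain k w1 where a: "a = s k x + w1" "w1 \<in> W" using dec by blast
    obtain m w2 where b: "b = s m x + w2" "w2 \<in> W" using dec by blast
    have "t a b c = s k (t x w2 c) + t w1 b c" unfolding a(1) b(1) by (simp add: alt)
    moreover have "t x w2 c \<in> W2" by (rule ideal2[OF b(2)])
    moreover have "t w1 b c \<in> W2" by (rule ideal1[OF a(2)])
    ultimately show ?thesis by (simp add: span_add span_scale L_Suc[of "Suc 0"] del: lts_lcs.simps)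
  qed
  then have "W \<subseteq> W2" unfolding L_Suc[of 0] by (intro span_minimal subspace_L) auto
  then show False using notsub by simp
qed


lemma case_nz: assumes dim3: "dim (UNIV :: 'v set) = 3" and nil: "lts_nilpotent s t"
  and nz: "t x0 y0 z0 \<noteq> 0"
  shows "lts_isomorphic s t scale3 T32"
proof -
  define w where "w = t x0 y0 z0"
  have wW: "w \<in> W" unfolding w_def by (rule prod_in_W)
  have wnz: "w \<noteq> 0" using nz w_def by simp
  have notsub: "\<not> W \<subseteq> W2" using collapse[OF nil] nz by blast
  have line: "u \<in> span {w}" if "u \<in> W" for u using W_line[OF dim3 wnz wW notsub that] .
  have W2z: "y = 0" if y: "y \<in> W2" for y
  proof (rule ccontr)
    assume ynz: "y \<noteq> 0"
    have "y \<in> W" using y L_suc_sub[of "Suc 0"] by blast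
    then obtain k where k: "y = s k w" using line span_singleton by blast
    then have kz: "k \<noteq> 0" using ynz by auto
    have "w = s (inverse k) y" using k kz by simp
    then have "w \<in> W2" using y by (simp add: span_scale L_Suc[of "Suc 0"] del: lts_lcs.simps)
    then have "span {w} \<subseteq> W2" by (intro span_minimal subspace_L) auto
    then have "W \<subseteq> W2" using line by blast
    then show False using notsub by simp
  qed
  have z1: "t w b c = 0" "t b w c = 0" "t b c w = 0" for b c
    using W2z ideal1[OF wW] ideal2[OF wW] ideal3[OF wW] by auto
  have yz: "y0 \<notin> span {w}"
  proof
    assume "y0 \<in> span {w}"
    then obtain k where "y0 = s k w" using span_singleton by blast
    then have "t x0 y0 z0 = 0" using z1 by simp
    then show False using nz by simp
  qed
  have xz: "x0 \<notin> span {y0, w}"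
  proof
    assume "x0 \<in> span {y0, w}"
    then obtain k where "x0 - s k y0 \<in> span {w}" using span_breakdown_eq by blast
    then obtain m where "x0 - s k y0 = s m w" using span_singleton by blast
    then have "x0 = s k y0 + s m w" by (metis diff_eq_eq add.commute)
    then have "t x0 y0 z0 = 0" using z1 by (simp add: alt)
    then show False using nz by simp
  qed
  have ind: "independent {x0, y0, w}"
    using xz yz wnz by (intro independent_insertI) (auto simp: independent_empty)
  have "x0 \<notin> {y0, w}" "y0 \<noteq> w" using xz yz span_base by blast+
  then have "card {x0, y0, w} = 3" by auto
  then have sp: "span {x0, y0, w} = UNIV" using span3[OF dim3 ind] by simp
  define g where "g = comb x0 y0 w"
  have gbij: "bij g" unfolding g_def using comb_bij[OF wnz yz xz sp] .
  obtain \<alpha> where al: "t x0 y0 x0 = s \<alpha> w" using line[OF prod_in_W] span_singleton by blast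
  obtain \<beta> where be: "t x0 y0 y0 = s \<beta> w" using line[OF prod_in_W] span_singleton by blast
  have st1: "t (g (a1, b1, c1)) v r = s a1 (t x0 v r) + s b1 (t y0 v r)" for a1 b1 c1 v r
    unfolding g_def by (simp add: z1)
  have st2: "t x0 (g (a2, b2, c2)) r = s b2 (t x0 y0 r)" for a2 b2 c2 r
    unfolding g_def by (simp add: z1 alt)
  have st2': "t y0 (g (a2, b2, c2)) r = s (- a2) (t x0 y0 r)" for a2 b2 c2 r
    unfolding g_def by (simp add: z1 alt skew[of y0 x0])
  have st3: "t x0 y0 (g (a3, b3, c3)) = s (\<alpha> * a3 + \<beta> * b3) w" for a3 b3 c3
    unfolding g_def by (simp add: z1 al be algebra_simps)
  have form: "t (g (a1, b1, c1)) (g (a2, b2, c2)) (g (a3, b3, c3))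
      = s ((a1 * b2 - b1 * a2) * (\<alpha> * a3 + \<beta> * b3)) w" for a1 b1 c1 a2 b2 c2 a3 b3 c3
    unfolding st1 st2 st2' st3 by (simp add: algebra_simps)
  obtain a b c where zc: "g (a, b, c) = z0" using gbij by (metis bij_is_surj surj_f_inv_f prod_cases3)
  have "g (1, 0, 0) = x0" "g (0, 1, 0) = y0" unfolding g_def by simp_all
  then have "w = s (\<alpha> * a + \<beta> * b) w" using form[of 1 0 0 0 1 0 a b c] zc w_def by simp
  then have ab: "\<alpha> * a + \<beta> * b = 1" using wnz by (metis scale_cancel_right scale_one)
  define M :: "'a \<times> 'a \<times> 'a \<Rightarrow> 'a \<times> 'a \<times> 'a" where
    "M = (\<lambda>(u1, u2, u3). (u1 * a + u2 * \<beta>, u1 * b - u2 * \<alpha>, - u3))"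
  define N :: "'a \<times> 'a \<times> 'a \<Rightarrow> 'a \<times> 'a \<times> 'a" where
    "N = (\<lambda>(p1, p2, p3). (\<alpha> * p1 + \<beta> * p2, b * p1 - a * p2, - p3))"
  have MN: "M (N p) = p" for p
  proof -
    obtain p1 p2 p3 where p: "p = (p1, p2, p3)" by (cases p) auto
    have "(\<alpha> * p1 + \<beta> * p2) * a + (b * p1 - a * p2) * \<beta> = p1 * (\<alpha> * a + \<beta> * b)"
      by (simp add: algebra_simps)
    moreover have "(\<alpha> * p1 + \<beta> * p2) * b - (b * p1 - a * p2) * \<alpha> = p2 * (\<alpha> * a + \<beta> * b)"
      by (simp add: algebra_simps)
    ultimately show ?thesis unfolding p M_def N_def using ab by simp
  qed
  have NM: "N (M p) = p" for p
  proof -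
    obtain p1 p2 p3 where p: "p = (p1, p2, p3)" by (cases p) auto
    have "\<alpha> * (p1 * a + p2 * \<beta>) + \<beta> * (p1 * b - p2 * \<alpha>) = p1 * (\<alpha> * a + \<beta> * b)"
      by (simp add: algebra_simps)
    moreover have "b * (p1 * a + p2 * \<beta>) - a * (p1 * b - p2 * \<alpha>) = p2 * (\<alpha> * a + \<beta> * b)"
      by (simp add: algebra_simps)
    ultimately show ?thesis unfolding p M_def N_def using ab by simp
  qed
  have Mbij: "bij M" by (rule o_bij[of N]) (auto simp: MN NM)
  define h where "h = g \<circ> M"
  have hbij: "bij h" unfolding h_def using gbij Mbij by (rule bij_comp[rotated])
  have Madd: "M (p + q) = M p + M q" for p q
    by (cases p; cases q) (simp add: M_def plus_prod_def algebra_simps)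
  have Msc: "M (scale3 k p) = scale3 k (M p)" for k p
    by (cases p) (simp add: M_def scale3_def algebra_simps)
  have hadd: "h (p + q) = h p + h q" for p q unfolding h_def g_def by (simp add: Madd comb_add)
  have hsc: "h (scale3 k p) = s k (h p)" for k p unfolding h_def g_def by (simp add: Msc comb_sc)
  have ht: "t (h u) (h v) (h r) = h (T32 u v r)" for u v r
  proof -
    obtain u1 u2 u3 where u: "u = (u1, u2, u3)" by (cases u) auto
    obtain v1 v2 v3 where v: "v = (v1, v2, v3)" by (cases v) auto
    obtain r1 r2 r3 where r: "r = (r1, r2, r3)" by (cases r) auto
    have key: "((u1 * a + u2 * \<beta>) * (v1 * b - v2 * \<alpha>) - (u1 * b - u2 * \<alpha>) * (v1 * a + v2 * \<beta>)) *
          (\<alpha> * (r1 * a + r2 * \<beta>) + \<beta> * (r1 * b - r2 * \<alpha>))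
        = - (r1 * (u1 * v2 - u2 * v1)) * ((\<alpha> * a + \<beta> * b) * (\<alpha> * a + \<beta> * b))"
      by (simp add: algebra_simps)
    have "t (h u) (h v) (h r) = s (- (r1 * (u1 * v2 - u2 * v1))) w"
      unfolding u v r h_def M_def by (simp add: form key ab)
    moreover have "h (T32 u v r) = s (- (r1 * (u1 * v2 - u2 * v1))) w"
      unfolding u v r h_def M_def g_def T32_def by simp
    ultimately show ?thesis by simp
  qed
  show ?thesis
    by (rule iso_from_inv[of s scale3 h t T32, OF vector_space_axioms vs_scale3 hbij hadd hsc ht])
qed

lemma case_z: assumes dim3: "dim (UNIV :: 'v set) = 3" and z: "\<And>x y z. t x y z = 0"
  shows "lts_isomorphic s t scale3 T31"
proof -
  obtain B where B: "independent B" "UNIV \<subseteq> span B" "card B = dim (UNIV :: 'v set)"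
    using basis_exists[of UNIV] by blast
  obtain x y z where xyz: "B = {x, y, z}" "x \<noteq> y" "x \<noteq> z" "y \<noteq> z"
    using B(3) dim3 by (metis card_3_iff)
  have ind: "independent {x, y, z}" using B(1) xyz by simp
  have zz: "z \<noteq> 0" "y \<notin> span {z}" "x \<notin> span {y, z}"
    using ind xyz by (auto simp: independent_insert)
  have sp: "span {x, y, z} = UNIV" using B(2) xyz by auto
  show ?thesis
    by (rule iso_from_inv[of s scale3 "comb x y z" t T31, OF vector_space_axioms vs_scale3 comb_bij[OF zz sp] comb_add comb_sc])
       (simp add: z T31_def comb_def zero_prod_def)
qed

end

theorem mainTheorem3:
  fixes s :: "'a::field \<Rightarrow> 'v::ab_group_add \<Rightarrow> 'v"
    and t :: "'v \<Rightarrow> 'v \<Rightarrow> 'v \<Rightarrow> 'v"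
  assumes "CHAR('a) \<noteq> 2"
    and "lie_triple_system s t"
    and "lts_nilpotent s t"
    and "vector_space.dim s (UNIV :: 'v set) = 3"
  shows "lts_isomorphic s t scale3 (T31 :: 'a \<times> 'a \<times> 'a \<Rightarrow> _ \<Rightarrow> _ \<Rightarrow> _) \<noteq>
         lts_isomorphic s t scale3 (T32 :: 'a \<times> 'a \<times> 'a \<Rightarrow> _ \<Rightarrow> _ \<Rightarrow> _)"
proof -
  have L: "lts3 s t" unfolding lts3_def lts3_axioms_def using assms(2)
    by (auto simp: lie_triple_system_def)
  interpret T: lts3 s t by (rule L)
  have t000: "t 0 0 0 = 0" by (rule T.alt)
  have or: "lts_isomorphic s t scale3 (T31 :: 'a \<times> 'a \<times> 'a \<Rightarrow> _ \<Rightarrow> _ \<Rightarrow> _) \<or>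
         lts_isomorphic s t scale3 (T32 :: 'a \<times> 'a \<times> 'a \<Rightarrow> _ \<Rightarrow> _ \<Rightarrow> _)"
  proof (cases "\<forall>x y z. t x y z = 0")
    case True then show ?thesis using T.case_z[OF assms(4)] by blast
  next
    case False then obtain x0 y0 z0 where "t x0 y0 z0 \<noteq> 0" by blast
    then show ?thesis using T.case_nz[OF assms(4) assms(3)] by blast
  qed
  have notboth: "\<not> (lts_isomorphic s t scale3 (T31 :: 'a \<times> 'a \<times> 'a \<Rightarrow> _ \<Rightarrow> _ \<Rightarrow> _) \<and>
         lts_isomorphic s t scale3 (T32 :: 'a \<times> 'a \<times> 'a \<Rightarrow> _ \<Rightarrow> _ \<Rightarrow> _))"
  proof
    assume both: "lts_isomorphic s t scale3 (T31 :: 'a \<times> 'a \<times> 'a \<Rightarrow> _ \<Rightarrow> _ \<Rightarrow> _) \<and>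
         lts_isomorphic s t scale3 (T32 :: 'a \<times> 'a \<times> 'a \<Rightarrow> _ \<Rightarrow> _ \<Rightarrow> _)"
    then obtain f1 :: "'v \<Rightarrow> 'a \<times> 'a \<times> 'a" where f1: "bij f1" "\<And>x y z. f1 (t x y z) = T31 (f1 x) (f1 y) (f1 z)"
      unfolding lts_isomorphic_def by blast
    from both obtain f2 :: "'v \<Rightarrow> 'a \<times> 'a \<times> 'a" where f2: "bij f2" "\<And>x y z. f2 (t x y z) = T32 (f2 x) (f2 y) (f2 z)"
      unfolding lts_isomorphic_def by blast
    have f10: "f1 0 = 0" using f1(2)[of 0 0 0] t000 by (simp add: T31_def)
    have tz: "t x y z = 0" for x y z
      using f1(2)[of x y z] f10 bij_is_inj[OF f1(1)] by (metis T31_def injD)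
    have T32z: "T32 p p q = 0" for p q :: "'a \<times> 'a \<times> 'a"
      by (cases p; cases q) (simp add: T32_def zero_prod_def mult.commute)
    have f20: "f2 0 = 0" using f2(2)[of 0 0 0] t000 T32z by simp
    obtain x where x: "f2 x = (1, 0, 0)" using bij_is_surj[OF f2(1)] by (metis surj_f_inv_f)
    obtain y where y: "f2 y = (0, 1, 0)" using bij_is_surj[OF f2(1)] by (metis surj_f_inv_f)
    have "f2 (t x y x) = (0, 0, 1)" using f2(2)[of x y x] x y by (simp add: T32_def)
    then show False using tz[of x y x] f20 by (simp add: zero_prod_def)
  qed
  from or notboth show ?thesis by blast
qed

end
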